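(* Let $F_v$ be a non-archimedean local field with ring of integers $\mathcal{O}_{F_v}$, uniformizer $\varpi_v$ and residue field of size $q_v$. Let $e_v\ge0$ be an integer and let $\phi_v$ be the characteristic function of $\mathrm{Z}(F_v)\mathrm{K}_{v,e_v}$. For $s\in\mathbb{C}$ with $\Re(s)>1$ let \[ Z_v(s,\phi_v)=\int_{\mathrm{GL}_2(\mathcal{O}_{F_v})}\int_{F_v^\times}\phi_v\!\left(\kappa^{-1}\begin{pmatrix}1&y\\0&1\end{pmatrix}\kappa\right)|y|_v^{s}\,d_v^\times y\,d\kappa, \] and \[ g_v(s)=\frac{1}{q_v+1}\left(q_v^{1-e_vs}+(q_v-1)q_v^{(2-e_v)s-1}\frac{q_v^{(2s-1)[e_v/2]}-1}{q_v^{2s-1}-1}+q_v^{-[e_v/2]}\right). \] Then $Z_v(s,\phi_v)=\dfrac{g_v(s)}{1-q_v^{-s}}$.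
   Context: $\mathrm{Z}(F_v)$ is the center of $\mathrm{GL}_2(F_v)$; $\mathrm{K}_{v,e}=\{\begin{pmatrix}a&b\\c&d\end{pmatrix}\in\mathrm{GL}_2(\mathcal{O}_{F_v}):\varpi_v^e\mid c\}$; $d\kappa$ is the Haar measure on $\mathrm{GL}_2(\mathcal{O}_{F_v})$ of total volume $1$; $d_v^\times y=\frac{q_v}{q_v-1}\frac{d_vy}{|y|_v}$ where $d_vy$ is the additive Haar measure with $\mathrm{Vol}(\mathcal{O}_{F_v})=1$; $[\cdot]$ denotes the integer part. *)

theory Defs
  imports "HOL-Analysis.Analysis"
begin

text \<open>2x2 matrices over a field, represented as quadruples (a,b,c,d) = [[a,b],[c,d]].\<close>

type_synonym 'a m2 = "'a \<times> 'a \<times> 'a \<times> 'a"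

fun m2mult :: "'a::field m2 \<Rightarrow> 'a m2 \<Rightarrow> 'a m2" where
  "m2mult (a,b,c,d) (a',b',c',d') =
     (a*a' + b*c', a*b' + b*d', c*a' + d*c', c*b' + d*d')"

fun m2det :: "'a::field m2 \<Rightarrow> 'a" where
  "m2det (a,b,c,d) = a*d - b*c"

fun m2inv :: "'a::field m2 \<Rightarrow> 'a m2" where
  "m2inv (a,b,c,d) = (let D = a*d - b*c in (d/D, -b/D, -c/D, a/D))"

fun m2entries :: "'a m2 \<Rightarrow> 'a list" where
  "m2entries (a,b,c,d) = [a,b,c,d]"

fun m2lower :: "'a m2 \<Rightarrow> 'a" where
  "m2lower (a,b,c,d) = c"

definition intO :: "('a::field \<Rightarrow> real) \<Rightarrow> 'a set" where
  "intO absv = {x. absv x \<le> 1}"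

text \<open>Non-archimedean local field: complete w.r.t. a discrete non-archimedean
 absolute value, normalized so that the uniformizer has absolute value 1/q,
 with residue field O/(varpi O) of size q.\<close>
definition nonarch_local_field :: "('a::field \<Rightarrow> real) \<Rightarrow> nat \<Rightarrow> 'a \<Rightarrow> bool" where
  "nonarch_local_field absv q unif \<longleftrightarrow>
     (\<forall>x. 0 \<le> absv x) \<and> (\<forall>x. absv x = 0 \<longleftrightarrow> x = 0) \<and>
     (\<forall>x y. absv (x * y) = absv x * absv y) \<and>
     (\<forall>x y. absv (x + y) \<le> max (absv x) (absv y)) \<and>
     2 \<le> q \<and> absv unif = 1 / real q \<and>
     (\<forall>x. x \<noteq> 0 \<longrightarrow> (\<exists>n::int. absv x = real q powi n)) \<and>
     (\<exists>R. finite R \<and> card R = q \<and> R \<subseteq> intO absv \<and>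
          (\<forall>x\<in>intO absv. \<exists>!r\<in>R. absv (x - r) < 1)) \<and>
     (\<forall>X::nat \<Rightarrow> 'a. (\<forall>\<epsilon>>0. \<exists>N. \<forall>m\<ge>N. \<forall>n\<ge>N. absv (X m - X n) < \<epsilon>) \<longrightarrow>
          (\<exists>L. \<forall>\<epsilon>>0. \<exists>N. \<forall>n\<ge>N. absv (X n - L) < \<epsilon>))"

definition additive_haar :: "('a::field \<Rightarrow> real) \<Rightarrow> 'a measure \<Rightarrow> bool" where
  "additive_haar absv \<mu> \<longleftrightarrow>
     space \<mu> = UNIV \<and>
     sets \<mu> = sigma_sets UNIV {{x. absv (x - a) \<le> r} | a r. True} \<and>
     (\<forall>a. \<forall>A\<in>sets \<mu>. (\<lambda>x. a + x) ` A \<in> sets \<mu> \<and>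
                       emeasure \<mu> ((\<lambda>x. a + x) ` A) = emeasure \<mu> A) \<and>
     emeasure \<mu> (intO absv) = 1"

definition GL2O :: "('a::field \<Rightarrow> real) \<Rightarrow> 'a m2 set" where
  "GL2O absv = {g. set (m2entries g) \<subseteq> intO absv \<and> absv (m2det g) = 1}"

definition K0 :: "('a::field \<Rightarrow> real) \<Rightarrow> nat \<Rightarrow> nat \<Rightarrow> 'a m2 set" where
  "K0 absv q e = {g \<in> GL2O absv. absv (m2lower g) \<le> (1 / real q) ^ e}"

definition ZK0 :: "('a::field \<Rightarrow> real) \<Rightarrow> nat \<Rightarrow> nat \<Rightarrow> 'a m2 set" where
  "ZK0 absv q e = {m2mult (z,0,0,z) k | z k. z \<noteq> 0 \<and> k \<in> K0 absv q e}"

definition gl2O_haar :: "('a::field \<Rightarrow> real) \<Rightarrow> 'a m2 measure \<Rightarrow> bool" where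
  "gl2O_haar absv \<mu> \<longleftrightarrow>
     space \<mu> = GL2O absv \<and>
     sets \<mu> = sigma_sets (GL2O absv)
        {GL2O absv \<inter> {k. \<forall>i<4. absv (m2entries k ! i - m2entries g ! i) \<le> r} | g r. True} \<and>
     emeasure \<mu> (GL2O absv) = 1 \<and>
     (\<forall>g\<in>GL2O absv. \<forall>A\<in>sets \<mu>. m2mult g ` A \<in> sets \<mu> \<and>
                       emeasure \<mu> (m2mult g ` A) = emeasure \<mu> A)"

text \<open>The local zeta integral Z_v(s, phi_v), with d^x y = q/(q-1) dy/|y|.\<close>
definition Zv :: "('a::field \<Rightarrow> real) \<Rightarrow> nat \<Rightarrow> 'a measure \<Rightarrow> 'a m2 measure \<Rightarrow> nat \<Rightarrow> complex \<Rightarrow> complex" where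
  "Zv absv q dy dk e s =
     (LINT \<kappa>|dk. (LINT y|dy.
        (if y = 0 then 0 else
           complex_of_real (real q / (real q - 1)) *
           complex_of_real (indicator (ZK0 absv q e) (m2mult (m2inv \<kappa>) (m2mult (1, y, 0, 1) \<kappa>))) *
           complex_of_real (absv y) powr s / complex_of_real (absv y))))"

definition gv :: "nat \<Rightarrow> nat \<Rightarrow> complex \<Rightarrow> complex" where
  "gv q e s = (1 / (of_nat q + 1)) *
     (of_nat q powr (1 - of_nat e * s)
      + (of_nat q - 1) * of_nat q powr ((2 - of_nat e) * s - 1) *
          ((of_nat q powr ((2 * s - 1) * of_nat (e div 2)) - 1) / (of_nat q powr (2 * s - 1) - 1))
      + of_nat q powr (- of_nat (e div 2)))"

end

theory Submission
  imports Defs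
begin


locale nlf =
  fixes absv :: "'a::field \<Rightarrow> real" and q :: nat and p :: 'a
  assumes nlf: "nonarch_local_field absv q p"
begin

lemmas D = nlf[unfolded nonarch_local_field_def]
lemma nn: "0 \<le> absv x" using D[THEN conjunct1] by blast
lemma zero_iff[simp]: "absv x = 0 \<longleftrightarrow> x = 0" using D[THEN conjunct2, THEN conjunct1] by blast
lemma mult[simp]: "absv (x * y) = absv x * absv y" using D[THEN conjunct2, THEN conjunct2, THEN conjunct1] by blast
lemma ultra: "absv (x + y) \<le> max (absv x) (absv y)" using D[THEN conjunct2, THEN conjunct2, THEN conjunct2, THEN conjunct1] by blast
lemma q2: "2 \<le> q" using D[THEN conjunct2, THEN conjunct2, THEN conjunct2, THEN conjunct2, THEN conjunct1] by blast
lemma absp: "absv p = 1 / real q" using D[THEN conjunct2, THEN conjunct2, THEN conjunct2, THEN conjunct2, THEN conjunct2, THEN conjunct1] by blast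
lemma vals: "x \<noteq> 0 \<Longrightarrow> \<exists>n::int. absv x = real q powi n" using D[THEN conjunct2, THEN conjunct2, THEN conjunct2, THEN conjunct2, THEN conjunct2, THEN conjunct2, THEN conjunct1] by blast
lemma resid: "\<exists>R. finite R \<and> card R = q \<and> R \<subseteq> intO absv \<and>
          (\<forall>x\<in>intO absv. \<exists>!r\<in>R. absv (x - r) < 1)" using D[THEN conjunct2, THEN conjunct2, THEN conjunct2, THEN conjunct2, THEN conjunct2, THEN conjunct2, THEN conjunct2, THEN conjunct1] by blast

lemma abs0[simp]: "absv 0 = 0" by simp
lemma pos: "x \<noteq> 0 \<Longrightarrow> 0 < absv x" using nn[of x] zero_iff[of x] by linarith
lemma one[simp]: "absv 1 = 1"
proof -
  have "absv 1 = absv 1 * absv 1" using mult[of 1 1] by simp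
  moreover have "absv 1 \<noteq> 0" by simp
  ultimately show ?thesis by (metis mult_cancel_left1)
qed
lemma mone[simp]: "absv (-1) = 1"
proof -
  have "absv (-1) * absv (-1) = 1" using mult[of "-1" "-1"] by simp
  then have "absv (-1) ^ 2 = 1 ^ 2" by (simp add: power2_eq_square)
  then show ?thesis using nn[of "-1"] by (rule power2_eq_imp_eq) simp
qed

lemma uminus[simp]: "absv (- x) = absv x"
  using mult[of "-1" x] by simp
lemma minus_comm: "absv (x - y) = absv (y - x)"
  by (metis minus_diff_eq uminus)
lemma inv[simp]: "absv (inverse x) = inverse (absv x)"
proof (cases "x = 0")
  case False
  then have "absv (inverse x) * absv x = 1" using mult[of "inverse x" x] by simp
  moreover have "absv x \<noteq> 0" using False by simp
  ultimately show ?thesis by (simp add: field_simps)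
qed simp
lemma divide[simp]: "absv (x / y) = absv x / absv y"
  by (simp add: divide_inverse)
lemma power[simp]: "absv (x ^ n) = absv x ^ n"
  by (induction n) auto
lemma ultra_diff: "absv (x - y) \<le> max (absv x) (absv y)"
  using ultra[of x "-y"] by simp
lemma ultra_le: "absv x \<le> r \<Longrightarrow> absv y \<le> r \<Longrightarrow> absv (x + y) \<le> r"
  using ultra[of x y] by simp
lemma ultra_le_diff: "absv x \<le> r \<Longrightarrow> absv y \<le> r \<Longrightarrow> absv (x - y) \<le> r"
  using ultra_diff[of x y] by simp
lemma qpos: "0 < real q" using q2 by simp
lemma q1: "1 < real q" using q2 by simp
lemma absp_pow: "absv (p ^ n) = (1 / real q) ^ n" by (simp add: absp)
lemma p_nz: "p ^ n \<noteq> 0" using absp_pow[of n] qpos by (metis zero_iff zero_less_divide_1_iff zero_less_power less_irrefl)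

lemma disc1: assumes "absv x < 1" shows "absv x \<le> 1 / real q"
proof (cases "x = 0")
  case True then show ?thesis using qpos by simp
next
  case False
  then obtain n where n: "absv x = real q powi n" using vals by blast
  have "n < 0"
  proof (rule ccontr)
    assume "\<not> n < 0"
    then have "real q powi n = real q ^ nat n" by (simp add: power_int_def)
    also have "\<dots> \<ge> 1" using q1 by simp
    finally show False using assms n by simp
  qed
  then have "real q powi n = inverse (real q) ^ nat (-n)" by (simp add: power_int_def)
  also have "\<dots> \<le> inverse (real q) ^ 1"
    using \<open>n < 0\<close> q1 by (intro power_decreasing) (auto simp: field_simps)
  finally show ?thesis using n by (simp add: divide_inverse)
qed

lemma discn: assumes "absv x < (1 / real q) ^ n" shows "absv x \<le> (1 / real q) ^ Suc n"
proof -
  have "absv (x / p ^ n) < 1" using assms qpos by (simp add: absp field_simps)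
  then have "absv (x / p ^ n) \<le> 1 / real q" by (rule disc1)
  then show ?thesis using qpos by (simp add: absp field_simps)
qed

lemma vals_le1: assumes "x \<noteq> 0" "absv x \<le> 1" shows "\<exists>n::nat. absv x = (1 / real q) ^ n"
proof -
  obtain k where k: "absv x = real q powi k" using vals assms by blast
  have "k \<le> 0"
  proof (rule ccontr)
    assume "\<not> k \<le> 0"
    then have "real q powi k = real q ^ nat k" by (simp add: power_int_def)
    also have "\<dots> > 1" using q1 \<open>\<not> k \<le> 0\<close> by simp
    finally show False using assms k by simp
  qed
  then have "real q powi k = (1 / real q) ^ nat (-k)"
    by (cases "k = 0") (auto simp: power_int_def divide_inverse)
  then show ?thesis using k by metis
qed

lemma pw_inj: "((1 / real q) ^ n = (1 / real q) ^ m) \<longleftrightarrow> n = m"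
proof -
  have "0 < 1 / real q" "1 / real q < 1" using q1 by auto
  have "(1 / real q) ^ n = (1 / real q) ^ m \<longleftrightarrow> real q ^ n = real q ^ m"
    by (simp add: power_one_over)
  also have "\<dots> \<longleftrightarrow> n = m" using q1 by (rule power_inject_exp)
  finally show ?thesis .
qed
lemma pw_le: "((1 / real q) ^ n \<le> (1 / real q) ^ m) \<longleftrightarrow> m \<le> n"
proof -
  have "0 < 1 / real q" "1 / real q < 1" using q1 by auto
  then show ?thesis by (rule power_decreasing_iff)
qed

end


lemma m2mult_assoc: "m2mult (m2mult x y) z = m2mult x (m2mult y (z::'a::field m2))"
  by (cases x rule: prod_cases4; cases y rule: prod_cases4; cases z rule: prod_cases4) (simp add: algebra_simps)

lemma m2det_mult: "m2det (m2mult x y) = m2det x * m2det (y::'a::field m2)"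
  by (cases x rule: prod_cases4; cases y rule: prod_cases4) (simp add: algebra_simps)

lemma m2mult_id: "m2mult (1,0,0,1) x = (x::'a::field m2)"
  by (cases x rule: prod_cases4) simp

lemma lt1: "0 \<le> (x::real) \<Longrightarrow> x < 1 \<Longrightarrow> 0 \<le> y \<Longrightarrow> y \<le> 1 \<Longrightarrow> x * y < 1"
  using mult_left_le[of y x] by linarith
lemma lt1': "0 \<le> (x::real) \<Longrightarrow> x \<le> 1 \<Longrightarrow> 0 \<le> y \<Longrightarrow> y < 1 \<Longrightarrow> x * y < 1"
  using mult_right_le_one_le[of y x] by (metis lt1 mult.commute)

context nlf begin

lemma GL2O_iff: "(a,b,c,d) \<in> GL2O absv \<longleftrightarrow>
   absv a \<le> 1 \<and> absv b \<le> 1 \<and> absv c \<le> 1 \<and> absv d \<le> 1 \<and> absv (a*d - b*c) = 1"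
  by (auto simp: GL2O_def intO_def)

lemma abs_le1_mult: "absv x \<le> 1 \<Longrightarrow> absv y \<le> 1 \<Longrightarrow> absv (x*y) \<le> 1"
  using nn[of x] nn[of y] by (simp add: mult_le_one)

lemma GL2O_mult: assumes "g \<in> GL2O absv" "h \<in> GL2O absv" shows "m2mult g h \<in> GL2O absv"
proof -
  obtain a b c d where g: "g = (a,b,c,d)" by (cases g rule: prod_cases4)
  obtain a' b' c' d' where h: "h = (a',b',c',d')" by (cases h rule: prod_cases4)
  have det: "absv (m2det (m2mult g h)) = 1" using assms by (simp add: m2det_mult GL2O_def)
  show ?thesis using assms det unfolding g h
    by (simp only: GL2O_iff m2mult.simps m2det.simps) (auto intro!: ultra_le abs_le1_mult)
qed

lemma GL2O_c_small: assumes "(a,b,c,d) \<in> GL2O absv" "absv c < 1" shows "absv a = 1"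
proof (rule ccontr)
  assume "absv a \<noteq> 1"
  then have a: "absv a < 1" using assms by (simp add: GL2O_iff)
  have "absv (a*d) < 1" using a assms nn[of a] nn[of d]
    by (simp add: GL2O_iff) (rule lt1, auto)
  moreover have "absv (b*c) < 1" using assms nn[of b] nn[of c]
    by (simp add: GL2O_iff) (rule lt1', auto)
  ultimately have "absv (a*d - b*c) < 1" using ultra_diff[of "a*d" "b*c"] by simp
  then show False using assms by (simp add: GL2O_iff)
qed

lemma GL2O_cd: assumes "(a,b,c,d) \<in> GL2O absv" shows "absv c = 1 \<or> absv d = 1"
proof (rule ccontr)
  assume "\<not> (absv c = 1 \<or> absv d = 1)"
  then have cd: "absv c < 1" "absv d < 1" using assms by (auto simp: GL2O_iff)
  have "absv (a*d) < 1" using cd assms nn[of a] nn[of d]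
    by (simp add: GL2O_iff) (rule lt1', auto)
  moreover have "absv (b*c) < 1" using cd assms nn[of b] nn[of c]
    by (simp add: GL2O_iff) (rule lt1', auto)
  ultimately have "absv (a*d - b*c) < 1" using ultra_diff[of "a*d" "b*c"] by simp
  then show False using assms by (simp add: GL2O_iff)
qed

definition "RR = (SOME R. finite R \<and> card R = q \<and> R \<subseteq> intO absv \<and>
          (\<forall>x\<in>intO absv. \<exists>!r\<in>R. absv (x - r) < 1))"

lemma RR: "finite RR" "card RR = q" "RR \<subseteq> intO absv" "\<forall>x\<in>intO absv. \<exists>!r\<in>RR. absv (x - r) < 1"
  using someI_ex[OF resid] unfolding RR_def by blast+

lemma RR_le1: "t \<in> RR \<Longrightarrow> absv t \<le> 1" using RR(3) by (auto simp: intO_def)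

lemma RR_unique: assumes "t \<in> RR" "t' \<in> RR" "absv (t - t') < 1" shows "t = t'"
proof -
  have "t \<in> intO absv" using assms RR(3) by auto
  then have "\<exists>!r\<in>RR. absv (t - r) < 1" using RR(4) by blast
  moreover have "absv (t - t) < 1" by simp
  ultimately show ?thesis using assms by blast
qed

lemma RR_exists: assumes "absv x \<le> 1" shows "\<exists>r\<in>RR. absv (x - r) \<le> 1 / real q"
proof -
  have "x \<in> intO absv" using assms by (simp add: intO_def)
  then obtain r where "r \<in> RR" "absv (x - r) < 1" using RR(4) by blast
  then show ?thesis using disc1 by blast
qed

end


lemma all4: "(\<forall>i<(4::nat). P i) \<longleftrightarrow> P 0 \<and> P 1 \<and> P 2 \<and> P 3"
  by (auto simp: less_Suc_eq eval_nat_numeral)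

lemma entries_nth: "m2entries (a,b,c,d) ! 0 = a" "m2entries (a,b,c,d) ! 1 = b"
   "m2entries (a,b,c,d) ! 2 = c" "m2entries (a,b,c,d) ! 3 = d"
  by (simp_all add: eval_nat_numeral)

context nlf begin

lemma reps: "\<exists>F. finite F \<and> (\<forall>x. absv x \<le> 1 \<longrightarrow> (\<exists>r\<in>F. absv (x - r) \<le> (1 / real q) ^ n))"
proof (induction n)
  case 0
  show ?case by (rule exI[of _ "{0}"]) simp
next
  case (Suc n)
  then obtain F where F: "finite F" "\<And>x. absv x \<le> 1 \<Longrightarrow> \<exists>r\<in>F. absv (x - r) \<le> (1 / real q) ^ n" by blast
  define F' where "F' = (\<lambda>(r,t). r + p ^ n * t) ` (F \<times> RR)"
  have "finite F'" unfolding F'_def using F(1) RR(1) by simp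
  moreover have "\<exists>r\<in>F'. absv (x - r) \<le> (1 / real q) ^ Suc n" if x: "absv x \<le> 1" for x
  proof -
    obtain r where r: "r \<in> F" "absv (x - r) \<le> (1 / real q) ^ n" using F(2)[OF x] by blast
    define z where "z = (x - r) / p ^ n"
    have "absv z \<le> 1" using r(2) qpos by (simp add: z_def absp field_simps)
    then obtain t where t: "t \<in> RR" "absv (z - t) \<le> 1 / real q" using RR_exists by blast
    have eq: "x - (r + p ^ n * t) = p ^ n * (z - t)" using p_nz[of n] by (simp add: z_def field_simps)
    have "(1 / real q) ^ n * absv (z - t) \<le> (1 / real q) ^ n * (1 / real q)"
      using t(2) qpos by (intro mult_left_mono) auto
    then have "absv (x - (r + p ^ n * t)) \<le> (1 / real q) ^ Suc n"
      unfolding eq by (simp add: absp mult.commute)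
    moreover have "r + p ^ n * t \<in> F'" unfolding F'_def using r(1) t(1) by force
    ultimately show ?thesis by blast
  qed
  ultimately show ?case by blast
qed

definition "S j = {k \<in> GL2O absv. absv (m2lower k) \<le> (1 / real q) ^ j}"

lemma S_iff: "(a,b,c,d) \<in> S j \<longleftrightarrow> (a,b,c,d) \<in> GL2O absv \<and> absv c \<le> (1 / real q) ^ j"
  by (simp add: S_def)

lemma S_sub: "S j \<subseteq> GL2O absv" by (auto simp: S_def)

lemma S0: "S 0 = GL2O absv" by (auto simp: S_def GL2O_def intO_def)

lemma img: assumes "g \<in> GL2O absv" "h \<in> GL2O absv" "m2mult h g = (1,0,0,1)" "m2mult g h = (1,0,0,1)"
  "A \<subseteq> GL2O absv" shows "m2mult g ` A = {k \<in> GL2O absv. m2mult h k \<in> A}"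
proof (intro equalityI subsetI)
  fix k assume "k \<in> m2mult g ` A"
  then obtain a where a: "a \<in> A" "k = m2mult g a" by blast
  then have "k \<in> GL2O absv" using assms GL2O_mult by blast
  moreover have "m2mult h k \<in> A" using a assms by (simp add: m2mult_assoc[symmetric] m2mult_id)
  ultimately show "k \<in> {k \<in> GL2O absv. m2mult h k \<in> A}" by blast
next
  fix k assume k: "k \<in> {k \<in> GL2O absv. m2mult h k \<in> A}"
  have "k = m2mult g (m2mult h k)" using assms by (simp add: m2mult_assoc[symmetric] m2mult_id)
  then show "k \<in> m2mult g ` A" using k by blast
qed

lemma L_GL: "absv x \<le> 1 \<Longrightarrow> (1,0,x,1) \<in> GL2O absv" by (simp add: GL2O_iff)

lemma shear_GL: assumes "(a,b,c,d) \<in> GL2O absv" "absv x \<le> 1" shows "(a, b, c - x*a, d - x*b) \<in> GL2O absv"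
proof -
  have "m2mult (1,0,-x,1) (a,b,c,d) \<in> GL2O absv" by (rule GL2O_mult[OF L_GL assms(1)]) (simp add: assms(2))
  moreover have "m2mult (1,0,-x,1) (a,b,c,d) = (a, b, c - x*a, d - x*b)" by simp
  ultimately show ?thesis by metis
qed

lemma memL: assumes "absv x \<le> 1" "A \<subseteq> GL2O absv"
  shows "(a,b,c,d) \<in> m2mult (1,0,x,1) ` A \<longleftrightarrow> (a,b,c,d) \<in> GL2O absv \<and> (a, b, c - x*a, d - x*b) \<in> A"
proof -
  have "m2mult (1,0,x,1) ` A = {k \<in> GL2O absv. m2mult (1,0,-x,1) k \<in> A}"
    using assms by (intro img) (auto intro!: L_GL)
  then show ?thesis by simp
qed

lemma w_GL: "(0,1,1,0) \<in> GL2O absv" by (simp add: GL2O_iff)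

lemma memw: assumes "A \<subseteq> GL2O absv"
  shows "(a,b,c,d) \<in> m2mult (0,1,1,0) ` A \<longleftrightarrow> (a,b,c,d) \<in> GL2O absv \<and> (c,d,a,b) \<in> A"
proof -
  have "m2mult (0,1,1,0) ` A = {k \<in> GL2O absv. m2mult (0,1,1,0) k \<in> A}"
    using assms by (intro img) (auto intro!: w_GL)
  then show ?thesis by simp
qed

lemma swap_GL: "(a,b,c,d) \<in> GL2O absv \<Longrightarrow> (c,d,a,b) \<in> GL2O absv"
  using minus_comm[of "a*d" "b*c"] by (simp add: GL2O_iff mult.commute)

lemma memL_S: assumes "absv x \<le> 1"
  shows "(a,b,c,d) \<in> m2mult (1,0,x,1) ` S j \<longleftrightarrow> (a,b,c,d) \<in> GL2O absv \<and> absv (c - x*a) \<le> (1 / real q) ^ j"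
  using memL[OF assms S_sub] shear_GL[OF _ assms] by (auto simp: S_iff)

lemma memw_S: "(a,b,c,d) \<in> m2mult (0,1,1,0) ` S j \<longleftrightarrow> (a,b,c,d) \<in> GL2O absv \<and> absv a \<le> (1 / real q) ^ j"
  using memw[OF S_sub] swap_GL by (auto simp: S_iff)

lemma a_unit: assumes "(a,b,c,d) \<in> GL2O absv" "absv (c - t*a) < 1" "absv t \<le> 1" shows "absv a = 1"
proof (rule ccontr)
  assume "absv a \<noteq> 1"
  then have "absv a < 1" using assms by (simp add: GL2O_iff)
  then have "absv (t*a) < 1" using assms nn[of t] nn[of a] by simp (rule lt1', auto)
  then have "absv ((c - t*a) + t*a) < 1" using assms ultra[of "c - t*a" "t*a"] by simp
  then show False using GL2O_c_small[OF assms(1)] \<open>absv a < 1\<close> by simp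
qed

end


locale nlfk = nlf absv q p for absv :: "'a::field \<Rightarrow> real" and q p +
  fixes dk :: "'a m2 measure"
  assumes hk: "gl2O_haar absv dk"
begin

lemma dk_space: "space dk = GL2O absv" using hk unfolding gl2O_haar_def by blast
lemma dk_sets: "sets dk = sigma_sets (GL2O absv)
        {GL2O absv \<inter> {k. \<forall>i<4. absv (m2entries k ! i - m2entries g ! i) \<le> r} | g r. True}"
  using hk unfolding gl2O_haar_def by blast
lemma dk_one: "emeasure dk (GL2O absv) = 1" using hk unfolding gl2O_haar_def by blast
lemma dk_inv: "g \<in> GL2O absv \<Longrightarrow> A \<in> sets dk \<Longrightarrow> m2mult g ` A \<in> sets dk \<and> emeasure dk (m2mult g ` A) = emeasure dk A"
  using hk unfolding gl2O_haar_def by blast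

lemma dk_prob: "finite_measure dk" by (rule finite_measureI) (simp add: dk_space dk_one)

lemma dk_fin: "emeasure dk A \<noteq> \<infinity>"
  using finite_measure.emeasure_finite[OF dk_prob] by simp

lemma dk_inv_meas: "g \<in> GL2O absv \<Longrightarrow> A \<in> sets dk \<Longrightarrow> measure dk (m2mult g ` A) = measure dk A"
  using dk_inv by (simp add: measure_def)

lemma ball_meas: "GL2O absv \<inter> {k. \<forall>i<4. absv (m2entries k ! i - m2entries g ! i) \<le> r} \<in> sets dk"
  unfolding dk_sets by (rule sigma_sets.Basic) blast

lemma S_meas: "S j \<in> sets dk"
proof -
  obtain F where F: "finite F" "\<And>x. absv x \<le> 1 \<Longrightarrow> \<exists>r\<in>F. absv (x - r) \<le> (1 / real q) ^ j"
    using reps[of j] by blast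
  define G where "G = {g \<in> F \<times> F \<times> F \<times> F. absv (m2lower g) \<le> (1 / real q) ^ j}"
  define Ball where "Ball g = GL2O absv \<inter> {k. \<forall>i<4. absv (m2entries k ! i - m2entries g ! i) \<le> (1 / real q) ^ j}" for g
  have fG: "finite G" unfolding G_def using F(1) by simp
  have eq: "S j = \<Union> (Ball ` G)"
  proof (intro equalityI subsetI)
    fix k assume k: "k \<in> S j"
    obtain a b c d where kk: "k = (a,b,c,d)" by (cases k rule: prod_cases4)
    have k': "(a,b,c,d) \<in> GL2O absv" "absv c \<le> (1 / real q) ^ j" using k unfolding kk S_iff by auto
    obtain ra where ra: "ra \<in> F" "absv (a - ra) \<le> (1 / real q) ^ j" using F(2) k'(1) by (auto simp: GL2O_iff)
    obtain rb where rb: "rb \<in> F" "absv (b - rb) \<le> (1 / real q) ^ j" using F(2) k'(1) by (auto simp: GL2O_iff)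
    obtain rc where rc: "rc \<in> F" "absv (c - rc) \<le> (1 / real q) ^ j" using F(2) k'(1) by (auto simp: GL2O_iff)
    obtain rd where rd: "rd \<in> F" "absv (d - rd) \<le> (1 / real q) ^ j" using F(2) k'(1) by (auto simp: GL2O_iff)
    have "absv (c - (c - rc)) \<le> (1 / real q) ^ j" by (rule ultra_le_diff) (use k' rc in auto)
    then have "(ra,rb,rc,rd) \<in> G" unfolding G_def using ra rb rc rd by simp
    moreover have "k \<in> Ball (ra,rb,rc,rd)" unfolding Ball_def kk all4 entries_nth using k' ra rb rc rd by simp
    ultimately show "k \<in> \<Union> (Ball ` G)" by blast
  next
    fix k assume "k \<in> \<Union> (Ball ` G)"
    then obtain g where g: "g \<in> G" "k \<in> Ball g" by blast
    obtain a b c d where kk: "k = (a,b,c,d)" by (cases k rule: prod_cases4)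
    obtain a' b' c' d' where gg: "g = (a',b',c',d')" by (cases g rule: prod_cases4)
    have h: "(a,b,c,d) \<in> GL2O absv" "absv (c - c') \<le> (1 / real q) ^ j" "absv c' \<le> (1 / real q) ^ j"
      using g unfolding kk gg Ball_def G_def all4 entries_nth by auto
    have "absv ((c - c') + c') \<le> (1 / real q) ^ j" by (rule ultra_le) (use h in auto)
    then show "k \<in> S j" unfolding kk S_iff using h by simp
  qed
  have "\<Union> (Ball ` G) \<in> sets dk"
    by (rule sets.finite_Union) (use fG ball_meas in \<open>auto simp: Ball_def\<close>)
  then show ?thesis using eq by simp
qed

lemma scale_le: "(1 / real q) ^ j * y \<le> (1 / real q) ^ Suc j \<longleftrightarrow> y \<le> 1 / real q"
proof -
  have "0 < (1 / real q) ^ j" using qpos by simp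
  then show ?thesis by (simp only: power_Suc2 mult_le_cancel_left_pos)
qed

lemma coset_a: "measure dk (S 1) = 1 / (real q + 1)"
proof -
  define LS where "LS t = m2mult (1,0,t,1) ` S 1" for t
  define WS where "WS = m2mult (0,1,1,0) ` S 1"
  have qq: "1 / real q < 1" using q1 by simp
  have LSm: "LS t \<in> sets dk" if "t \<in> RR" for t
    unfolding LS_def using dk_inv[OF L_GL[OF RR_le1[OF that]] S_meas] by blast
  have WSm: "WS \<in> sets dk" unfolding WS_def using dk_inv[OF w_GL S_meas] by blast
  have LSmu: "measure dk (LS t) = measure dk (S 1)" if "t \<in> RR" for t
    unfolding LS_def using dk_inv_meas[OF L_GL[OF RR_le1[OF that]] S_meas] .
  have WSmu: "measure dk WS = measure dk (S 1)" unfolding WS_def using dk_inv_meas[OF w_GL S_meas] .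
  have eq: "GL2O absv = (\<Union>t\<in>RR. LS t) \<union> WS"
  proof (intro equalityI subsetI)
    fix k assume k: "k \<in> GL2O absv"
    obtain a b c d where kk: "k = (a,b,c,d)" by (cases k rule: prod_cases4)
    show "k \<in> (\<Union>t\<in>RR. LS t) \<union> WS"
    proof (cases "absv a < 1")
      case True
      then have "k \<in> WS" unfolding WS_def kk memw_S using k disc1 kk by auto
      then show ?thesis by blast
    next
      case False
      then have a1: "absv a = 1" using k kk by (simp add: GL2O_iff)
      then have "absv (c / a) \<le> 1" using k kk by (simp add: GL2O_iff)
      then obtain r where r: "r \<in> RR" "absv (c / a - r) \<le> 1 / real q" using RR_exists by blast
      have "a \<noteq> 0" using a1 by auto
      then have "c - r * a = a * (c / a - r)" by (simp add: field_simps)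
      then have "absv (c - r * a) \<le> 1 / real q" using r a1 by simp
      then have "k \<in> LS r" unfolding LS_def kk memL_S[OF RR_le1[OF r(1)]] using k kk by simp
      then show ?thesis using r by blast
    qed
  next
    fix k assume "k \<in> (\<Union>t\<in>RR. LS t) \<union> WS"
    then show "k \<in> GL2O absv" unfolding LS_def WS_def using S_sub GL2O_mult L_GL RR_le1 w_GL by blast
  qed
  have LS_a: "absv a = 1 \<and> absv (c - t*a) \<le> 1 / real q" if "(a,b,c,d) \<in> LS t" "t \<in> RR" for a b c d t
  proof -
    have h: "(a,b,c,d) \<in> GL2O absv" "absv (c - t*a) \<le> 1 / real q"
      using that unfolding LS_def memL_S[OF RR_le1[OF that(2)]] by auto
    then show ?thesis using a_unit[OF h(1) _ RR_le1[OF that(2)]] qq by simp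
  qed
  have disj: "disjoint_family_on LS RR"
    unfolding disjoint_family_on_def
  proof (intro ballI impI)
    fix t t' assume tt: "t \<in> RR" "t' \<in> RR" "t \<noteq> t'"
    show "LS t \<inter> LS t' = {}"
    proof (rule ccontr)
      assume "LS t \<inter> LS t' \<noteq> {}"
      then obtain k where k: "k \<in> LS t" "k \<in> LS t'" by blast
      obtain a b c d where kk: "k = (a,b,c,d)" by (cases k rule: prod_cases4)
      have h: "absv a = 1" "absv (c - t*a) \<le> 1 / real q" "absv (c - t'*a) \<le> 1 / real q"
        using LS_a k tt unfolding kk by blast+
      have "absv ((c - t*a) - (c - t'*a)) \<le> 1 / real q" by (rule ultra_le_diff) (use h in auto)
      moreover have "(c - t*a) - (c - t'*a) = (t' - t) * a" by (simp add: algebra_simps)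
      ultimately have "absv (t' - t) < 1" using h qq by simp
      then show False using RR_unique tt by (metis)
    qed
  qed
  have disj2: "(\<Union>t\<in>RR. LS t) \<inter> WS = {}"
  proof (rule ccontr)
    assume "(\<Union>t\<in>RR. LS t) \<inter> WS \<noteq> {}"
    then obtain k t where k: "t \<in> RR" "k \<in> LS t" "k \<in> WS" by blast
    obtain a b c d where kk: "k = (a,b,c,d)" by (cases k rule: prod_cases4)
    have "absv a = 1" using LS_a k unfolding kk by blast
    moreover have "absv a \<le> 1 / real q" using k(3) unfolding kk WS_def memw_S by simp
    ultimately show False using qq by simp
  qed
  have UL: "(\<Union>t\<in>RR. LS t) \<in> sets dk" using LSm RR(1) by blast
  have "1 = measure dk (GL2O absv)" using dk_one by (simp add: measure_def)
  also have "\<dots> = measure dk (\<Union>t\<in>RR. LS t) + measure dk WS"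
    unfolding eq by (rule measure_Union[OF dk_fin dk_fin UL WSm disj2])
  also have "measure dk (\<Union>t\<in>RR. LS t) = (\<Sum>t\<in>RR. measure dk (LS t))"
    by (rule measure_finite_Union[OF RR(1) _ disj dk_fin]) (use LSm in blast)
  also have "\<dots> = real q * measure dk (S 1)" using LSmu RR(2) by simp
  finally have "1 = (real q + 1) * measure dk (S 1)" using WSmu by (simp add: algebra_simps)
  then show ?thesis using qpos by (simp add: field_simps)
qed

end


context nlfk begin

lemma coset_b: assumes j: "1 \<le> j" shows "measure dk (S j) = real q * measure dk (S (Suc j))"
proof -
  define LS where "LS t = m2mult (1,0,p^j*t,1) ` S (Suc j)" for t
  have qq: "1 / real q < 1" using q1 by simp
  have pjle: "(1 / real q) ^ j \<le> 1 / real q" using j qpos q1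
    by (metis pw_le power_one_right)
  have xle: "absv (p^j*t) \<le> 1" if "t \<in> RR" for t
  proof -
    have "(1 / real q) ^ j * absv t \<le> 1 * 1"
      using RR_le1[OF that] qpos nn[of t] by (intro mult_mono) (auto simp: power_le_one)
    then show ?thesis by (simp add: absp)
  qed
  have LSm: "LS t \<in> sets dk" if "t \<in> RR" for t
    unfolding LS_def using dk_inv[OF L_GL[OF xle[OF that]] S_meas] by blast
  have LSmu: "measure dk (LS t) = measure dk (S (Suc j))" if "t \<in> RR" for t
    unfolding LS_def using dk_inv_meas[OF L_GL[OF xle[OF that]] S_meas] .
  have LS_iff: "(a,b,c,d) \<in> LS t \<longleftrightarrow> (a,b,c,d) \<in> GL2O absv \<and> absv (c - (p^j*t)*a) \<le> (1 / real q) ^ Suc j"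
    if "t \<in> RR" for a b c d t
    unfolding LS_def using memL_S[OF xle[OF that]] by blast
  have eq: "S j = (\<Union>t\<in>RR. LS t)"
  proof (intro equalityI subsetI)
    fix k assume k: "k \<in> S j"
    obtain a b c d where kk: "k = (a,b,c,d)" by (cases k rule: prod_cases4)
    have k': "(a,b,c,d) \<in> GL2O absv" "absv c \<le> (1 / real q) ^ j" using k unfolding kk S_iff by auto
    have a1: "absv a = 1" using GL2O_c_small[OF k'(1)] k'(2) pjle qq by simp
    have pa: "p^j * a \<noteq> 0" using a1 p_nz[of j] by auto
    define z where "z = c / (p^j * a)"
    have "absv z = absv c / (1 / real q) ^ j" using a1 by (simp add: z_def absp)
    also have "\<dots> \<le> 1" using k'(2) qpos by (simp add: divide_le_eq)
    finally obtain r where r: "r \<in> RR" "absv (z - r) \<le> 1 / real q" using RR_exists by blast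
    have "c - (p^j*r)*a = (p^j * a) * (z - r)" using pa by (simp add: z_def field_simps)
    then have "absv (c - (p^j*r)*a) = (1 / real q) ^ j * absv (z - r)" using a1 by (simp add: absp)
    then have "absv (c - (p^j*r)*a) \<le> (1 / real q) ^ Suc j" using r(2) scale_le by simp
    then have "k \<in> LS r" unfolding kk LS_iff[OF r(1)] using k' by simp
    then show "k \<in> (\<Union>t\<in>RR. LS t)" using r by blast
  next
    fix k assume "k \<in> (\<Union>t\<in>RR. LS t)"
    then obtain t where t: "t \<in> RR" "k \<in> LS t" by blast
    obtain a b c d where kk: "k = (a,b,c,d)" by (cases k rule: prod_cases4)
    have h: "(a,b,c,d) \<in> GL2O absv" "absv (c - (p^j*t)*a) \<le> (1 / real q) ^ Suc j"
      using t unfolding kk LS_iff[OF t(1)] by auto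
    have "(1 / real q) ^ Suc j \<le> (1 / real q) ^ j" by (rule pw_le[THEN iffD2]) simp
    then have h2: "absv (c - (p^j*t)*a) \<le> (1 / real q) ^ j" using h by linarith
    have "(1 / real q) ^ j * (absv t * absv a) \<le> (1 / real q) ^ j * 1"
      using RR_le1[OF t(1)] h(1) nn[of t] nn[of a] qpos
      by (intro mult_left_mono) (auto simp: GL2O_iff mult_le_one)
    then have h3: "absv ((p^j*t)*a) \<le> (1 / real q) ^ j" by (simp add: absp)
    have "absv ((c - (p^j*t)*a) + (p^j*t)*a) \<le> (1 / real q) ^ j" by (rule ultra_le[OF h2 h3])
    then show "k \<in> S j" unfolding kk S_iff using h by simp
  qed
  have disj: "disjoint_family_on LS RR"
    unfolding disjoint_family_on_def
  proof (intro ballI impI)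
    fix t t' assume tt: "t \<in> RR" "t' \<in> RR" "t \<noteq> t'"
    show "LS t \<inter> LS t' = {}"
    proof (rule ccontr)
      assume "LS t \<inter> LS t' \<noteq> {}"
      then obtain k where k: "k \<in> LS t" "k \<in> LS t'" by blast
      obtain a b c d where kk: "k = (a,b,c,d)" by (cases k rule: prod_cases4)
      have h: "(a,b,c,d) \<in> GL2O absv" "absv (c - (p^j*t)*a) \<le> (1 / real q) ^ Suc j"
          "absv (c - (p^j*t')*a) \<le> (1 / real q) ^ Suc j"
        using k tt unfolding kk LS_iff[OF tt(1)] LS_iff[OF tt(2)] by auto
      have "k \<in> S j" using k(1) eq tt(1) by blast
      then have "absv c \<le> (1 / real q) ^ j" unfolding kk S_iff by simp
      then have a1: "absv a = 1" using GL2O_c_small[OF h(1)] pjle qq by simp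
      have "absv ((c - (p^j*t)*a) - (c - (p^j*t')*a)) \<le> (1 / real q) ^ Suc j"
        by (rule ultra_le_diff[OF h(2) h(3)])
      moreover have "(c - (p^j*t)*a) - (c - (p^j*t')*a) = p^j * ((t' - t) * a)" by (simp add: algebra_simps)
      ultimately have "(1 / real q) ^ j * absv (t' - t) \<le> (1 / real q) ^ Suc j" using a1 by (simp add: absp)
      then have "absv (t' - t) < 1" using scale_le qq by simp
      then show False using RR_unique tt by metis
    qed
  qed
  have "measure dk (S j) = (\<Sum>t\<in>RR. measure dk (LS t))"
    unfolding eq by (rule measure_finite_Union[OF RR(1) _ disj dk_fin]) (use LSm in blast)
  also have "\<dots> = real q * measure dk (S (Suc j))" using LSmu RR(2) by simp
  finally show ?thesis .
qed

lemma S_measure: "measure dk (S (Suc j)) = 1 / ((real q + 1) * real q ^ j)"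
proof (induction j)
  case 0
  then show ?case using coset_a by simp
next
  case (Suc j)
  have "measure dk (S (Suc j)) = real q * measure dk (S (Suc (Suc j)))" by (rule coset_b) simp
  then have "measure dk (S (Suc (Suc j))) = measure dk (S (Suc j)) / real q" using qpos by simp
  also have "\<dots> = 1 / ((real q + 1) * real q ^ Suc j)" using Suc.IH by simp
  finally show ?case .
qed

lemma S0_measure: "measure dk (S 0) = 1"
  using dk_one by (simp add: S0 measure_def)

end


lemma (in nlf) scale_le2: "(1 / real q) ^ j * y \<le> (1 / real q) ^ Suc j \<longleftrightarrow> y \<le> 1 / real q"
proof -
  have "0 < (1 / real q) ^ j" using qpos by simp
  then show ?thesis by (simp only: power_Suc2 mult_le_cancel_left_pos)
qed

locale nlfy = nlf absv q p for absv :: "'a::field \<Rightarrow> real" and q p +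
  fixes dy :: "'a measure"
  assumes hy: "additive_haar absv dy"
begin

lemma dy_space: "space dy = UNIV" using hy unfolding additive_haar_def by blast
lemma dy_sets: "sets dy = sigma_sets UNIV {{x. absv (x - a) \<le> r} | a r. True}"
  using hy unfolding additive_haar_def by blast
lemma dy_inv: "A \<in> sets dy \<Longrightarrow> (\<lambda>x. a + x) ` A \<in> sets dy \<and> emeasure dy ((\<lambda>x. a + x) ` A) = emeasure dy A"
  using hy unfolding additive_haar_def by blast
lemma dy_O: "emeasure dy (intO absv) = 1" using hy unfolding additive_haar_def by blast

lemma ball_meas: "{x. absv (x - a) \<le> r} \<in> sets dy"
  unfolding dy_sets by (rule sigma_sets.Basic) blast

definition "Bl n = {x. absv x \<le> (1 / real q) ^ n}"

lemma Bl_meas: "Bl n \<in> sets dy" using ball_meas[of 0] by (simp add: Bl_def)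

lemma Bl0: "Bl 0 = intO absv" by (simp add: Bl_def intO_def)

lemma Bl_fin: "emeasure dy (Bl n) < \<infinity>"
proof -
  have "Bl n \<subseteq> Bl 0" unfolding Bl_def using q1
    by (auto intro: order_trans[OF _ power_le_one])
  then have "emeasure dy (Bl n) \<le> emeasure dy (Bl 0)" by (intro emeasure_mono Bl_meas)
  then show ?thesis using dy_O Bl0 by (simp add: le_less_trans)
qed

lemma transl: "(\<lambda>x. a + x) ` Bl n = {x. absv (x - a) \<le> (1 / real q) ^ n}"
proof (intro equalityI subsetI)
  fix x assume "x \<in> (\<lambda>x. a + x) ` Bl n"
  then show "x \<in> {x. absv (x - a) \<le> (1 / real q) ^ n}" by (auto simp: Bl_def)
next
  fix x assume "x \<in> {x. absv (x - a) \<le> (1 / real q) ^ n}"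
  then have "x - a \<in> Bl n" "x = a + (x - a)" by (auto simp: Bl_def)
  then show "x \<in> (\<lambda>x. a + x) ` Bl n" by blast
qed

lemma Bl_step: "measure dy (Bl n) = real q * measure dy (Bl (Suc n))"
proof -
  define T where "T r = (\<lambda>x. p^n * r + x) ` Bl (Suc n)" for r
  have qq: "1 / real q < 1" using q1 by simp
  have T_iff: "x \<in> T r \<longleftrightarrow> absv (x - p^n * r) \<le> (1 / real q) ^ Suc n" for x r
    unfolding T_def transl by simp
  have Tm: "T r \<in> sets dy" for r unfolding T_def using dy_inv[OF Bl_meas] by blast
  have Tmu: "measure dy (T r) = measure dy (Bl (Suc n))" for r
    unfolding T_def using dy_inv[OF Bl_meas] by (simp add: measure_def)
  have Tfin: "emeasure dy (T r) \<noteq> \<infinity>" for r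
    unfolding T_def using dy_inv[OF Bl_meas] Bl_fin[of "Suc n"] by (simp add: less_top)
  have eq: "Bl n = (\<Union>r\<in>RR. T r)"
  proof (intro equalityI subsetI)
    fix x assume x: "x \<in> Bl n"
    define z where "z = x / p^n"
    have "absv z \<le> 1" using x qpos by (simp add: z_def Bl_def absp divide_le_eq)
    then obtain r where r: "r \<in> RR" "absv (z - r) \<le> 1 / real q" using RR_exists by blast
    have "x - p^n * r = p^n * (z - r)" using p_nz[of n] by (simp add: z_def field_simps)
    then have "absv (x - p^n * r) = (1 / real q) ^ n * absv (z - r)" by (simp add: absp)
    then have "x \<in> T r" unfolding T_iff using r(2) scale_le2 by simp
    then show "x \<in> (\<Union>r\<in>RR. T r)" using r by blast
  next
    fix x assume "x \<in> (\<Union>r\<in>RR. T r)"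
    then obtain r where r0: "r \<in> RR" "x \<in> T r" by blast
    then have r: "r \<in> RR" "absv (x - p^n * r) \<le> (1 / real q) ^ Suc n" using T_iff by auto
    have "(1 / real q) ^ Suc n \<le> (1 / real q) ^ n" by (rule pw_le[THEN iffD2]) simp
    then have h1: "absv (x - p^n * r) \<le> (1 / real q) ^ n" using r by linarith
    have "(1 / real q) ^ n * absv r \<le> (1 / real q) ^ n * 1"
      using RR_le1[OF r(1)] qpos by (intro mult_left_mono) auto
    then have h2: "absv (p^n * r) \<le> (1 / real q) ^ n" by (simp add: absp)
    have "absv ((x - p^n * r) + p^n * r) \<le> (1 / real q) ^ n" by (rule ultra_le[OF h1 h2])
    then show "x \<in> Bl n" by (simp add: Bl_def)
  qed
  have disj: "disjoint_family_on T RR"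
    unfolding disjoint_family_on_def
  proof (intro ballI impI)
    fix t t' assume tt: "t \<in> RR" "t' \<in> RR" "t \<noteq> t'"
    show "T t \<inter> T t' = {}"
    proof (rule ccontr)
      assume "T t \<inter> T t' \<noteq> {}"
      then obtain x where "x \<in> T t" "x \<in> T t'" by blast
      then have h: "absv (x - p^n * t) \<le> (1 / real q) ^ Suc n" "absv (x - p^n * t') \<le> (1 / real q) ^ Suc n"
        unfolding T_iff by auto
      have "absv ((x - p^n * t) - (x - p^n * t')) \<le> (1 / real q) ^ Suc n" by (rule ultra_le_diff[OF h])
      moreover have "(x - p^n * t) - (x - p^n * t') = p^n * (t' - t)" by (simp add: algebra_simps)
      ultimately have "(1 / real q) ^ n * absv (t' - t) \<le> (1 / real q) ^ Suc n" by (simp add: absp)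
      then have "absv (t' - t) < 1" using scale_le2 qq by simp
      then show False using RR_unique tt by metis
    qed
  qed
  have "measure dy (Bl n) = (\<Sum>r\<in>RR. measure dy (T r))"
    unfolding eq by (rule measure_finite_Union[OF RR(1) _ disj Tfin]) (use Tm in blast)
  also have "\<dots> = real q * measure dy (Bl (Suc n))" using Tmu RR(2) by simp
  finally show ?thesis .
qed

lemma Bl_measure: "measure dy (Bl n) = (1 / real q) ^ n"
proof (induction n)
  case 0
  then show ?case using dy_O Bl0 by (simp add: measure_def)
next
  case (Suc n)
  have "measure dy (Bl n) = real q * measure dy (Bl (Suc n))" by (rule Bl_step)
  then have "measure dy (Bl (Suc n)) = measure dy (Bl n) / real q" using qpos by (simp add: field_simps)
  then show ?case using Suc by simp
qed

definition "shell n = {x. absv x = (1 / real q) ^ n}"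

lemma shell_eq: "shell n = Bl n - Bl (Suc n)"
proof (intro equalityI subsetI)
  fix x assume "x \<in> shell n"
  then show "x \<in> Bl n - Bl (Suc n)" using pw_le[of n "Suc n"] by (simp add: shell_def Bl_def del: power_Suc)
next
  fix x assume x: "x \<in> Bl n - Bl (Suc n)"
  then have "x \<noteq> 0" by (auto simp: Bl_def)
  moreover have "absv x \<le> 1" using x q1 by (auto simp: Bl_def intro: order_trans[OF _ power_le_one])
  ultimately obtain m where m: "absv x = (1 / real q) ^ m" using vals_le1 by blast
  then have "m = n" using x pw_le[of m n] pw_le[of m "Suc n"] by (simp add: Bl_def del: power_Suc)
  then show "x \<in> shell n" using m by (simp add: shell_def)
qed

lemma shell_meas: "shell n \<in> sets dy" unfolding shell_eq using Bl_meas by blast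

lemma shell_fin: "emeasure dy (shell n) < \<infinity>"
  using emeasure_mono[of "shell n" "Bl n" dy] Bl_meas Bl_fin unfolding shell_eq
  by (meson Diff_subset le_less_trans)

lemma shell_measure: "measure dy (shell n) = (1 / real q) ^ n * (1 - 1 / real q)"
proof -
  have le: "(1 / real q) ^ Suc n \<le> (1 / real q) ^ n" by (rule pw_le[THEN iffD2]) simp
  have sub: "Bl (Suc n) \<subseteq> Bl n" unfolding Bl_def using le by (auto simp del: power_Suc)
  have fin: "emeasure dy (Bl n) \<noteq> \<infinity>" using Bl_fin[of n] by (simp add: less_top)
  have "measure dy (shell n) = measure dy (Bl n) - measure dy (Bl (Suc n))"
    unfolding shell_eq by (rule measure_Diff[OF fin Bl_meas Bl_meas sub])
  then show ?thesis using Bl_measure by (simp add: algebra_simps)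
qed

lemma shell_unique: "x \<in> shell n \<Longrightarrow> x \<in> shell m \<Longrightarrow> n = m"
  using pw_inj by (simp add: shell_def)

end


context nlfy begin

lemma shell_int: "integral\<^sup>L dy (\<lambda>y. indicator (shell n) y *\<^sub>R (c::complex)) = measure dy (shell n) *\<^sub>R c"
proof -
  have "integrable dy (indicator (shell n) :: 'a \<Rightarrow> real)"
    using shell_meas shell_fin by (rule integrable_real_indicator)
  then show ?thesis using dy_space by simp
qed

lemma shell_finite_idx: "finite {n. y \<in> shell n}"
proof (cases "\<exists>m. y \<in> shell m")
  case True
  then obtain m where "y \<in> shell m" by blast
  then have "{n. y \<in> shell n} \<subseteq> {m}" using shell_unique by blast
  then show ?thesis using finite_subset by blast
qed simp

lemma inner_sums:
  fixes \<beta> :: "nat \<Rightarrow> complex" and X :: complex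
  assumes X: "norm X < 1" and \<beta>: "\<And>n. norm (\<beta> n) \<le> 1"
  defines "V n \<equiv> complex_of_real (real q / (real q - 1)) * X^n / complex_of_real ((1/real q)^n)"
  shows "(\<lambda>n. \<beta> n * X^n) sums (LINT y|dy. (\<Sum>n. indicator (shell n) y *\<^sub>R (\<beta> n * V n)))"
proof -
  define f where "f n y = indicator (shell n) y *\<^sub>R (\<beta> n * V n)" for n y
  have K: "measure dy (shell n) * ((real q / (real q - 1)) / (1 / real q) ^ n) = 1" for n
    using q1 by (simp add: shell_measure field_simps)
  have intf: "integral\<^sup>L dy (f n) = \<beta> n * X^n" for n
  proof -
    have "integral\<^sup>L dy (f n) = measure dy (shell n) *\<^sub>R (\<beta> n * V n)" unfolding f_def by (rule shell_int)
    also have "\<dots> = complex_of_real (measure dy (shell n)) * complex_of_real ((real q / (real q - 1)) / (1 / real q) ^ n) * (\<beta> n * X^n)"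
      unfolding V_def scaleR_conv_of_real of_real_divide by (simp add: algebra_simps)
    also have "\<dots> = complex_of_real (measure dy (shell n) * ((real q / (real q - 1)) / (1 / real q) ^ n)) * (\<beta> n * X^n)"
      by simp
    also have "\<dots> = \<beta> n * X^n" by (subst K) simp
    finally show ?thesis .
  qed
  have integ: "integrable dy (f n)" for n
    unfolding f_def using shell_meas shell_fin by (intro integrable_scaleR_left integrable_real_indicator) auto
  have summ: "AE y in dy. summable (\<lambda>n. norm (f n y))"
  proof (rule AE_I2)
    fix y
    show "summable (\<lambda>n. norm (f n y))"
      by (rule summable_finite[OF shell_finite_idx[of y]]) (simp add: f_def)
  qed
  have nint: "(\<integral>y. norm (f n y) \<partial>dy) = norm (\<beta> n * X^n)" for n
  proof -
    have "(\<integral>y. norm (f n y) \<partial>dy) = (\<integral>y. indicator (shell n) y *\<^sub>R norm (\<beta> n * V n) \<partial>dy)"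
      unfolding f_def by (intro Bochner_Integration.integral_cong) (auto simp: indicator_def)
    also have "\<dots> = measure dy (shell n) *\<^sub>R norm (\<beta> n * V n)"
    proof -
      have "integrable dy (indicator (shell n) :: 'a \<Rightarrow> real)"
        using shell_meas shell_fin by (rule integrable_real_indicator)
      then show ?thesis using dy_space by simp
    qed
    also have "\<dots> = norm (measure dy (shell n) *\<^sub>R (\<beta> n * V n))" by simp
    also have "\<dots> = norm (integral\<^sup>L dy (f n))" unfolding f_def shell_int ..
    finally show ?thesis using intf by simp
  qed
  have summ2: "summable (\<lambda>n. (\<integral>y. norm (f n y) \<partial>dy))"
    unfolding nint
  proof (rule summable_comparison_test[where g="\<lambda>n. norm X ^ n"])
    show "\<exists>N. \<forall>n\<ge>N. norm (norm (\<beta> n * X ^ n)) \<le> norm X ^ n"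
      using \<beta> by (auto simp: norm_mult norm_power intro!: mult_left_le_one_le)
    show "summable (\<lambda>n. norm X ^ n)" using X by (simp add: summable_geometric)
  qed
  have "(\<lambda>n. integral\<^sup>L dy (f n)) sums (\<integral>y. (\<Sum>n. f n y) \<partial>dy)"
    by (rule sums_integral[OF integ summ summ2])
  then show ?thesis unfolding intf f_def .
qed

end


lemma cpowr_E: assumes "0 < q" shows "(of_nat q :: complex) powr z = exp (z * of_real (ln (real q)))"
  using assms by (simp add: powr_def)

lemma real_powr_X: assumes "0 < q"
  shows "complex_of_real ((1 / real q) ^ m) powr s = ((of_nat q :: complex) powr (- s)) ^ m"
proof -
  define x where "x = (1 / real q) ^ m"
  have pos: "0 < x" using assms by (simp add: x_def)
  have lnx: "ln x = of_nat m * (- ln (real q))"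
    using assms by (simp add: x_def ln_realpow ln_div)
  have "complex_of_real x powr s = exp (s * of_real (ln x))"
    using pos by (simp add: powr_def Ln_of_real)
  also have "\<dots> = exp (of_nat m * (- s * of_real (ln (real q))))"
    unfolding lnx by (simp add: algebra_simps)
  finally have "complex_of_real ((1 / real q) ^ m) powr s = exp (of_nat m * (- s * of_real (ln (real q))))"
    unfolding x_def .
  also have "\<dots> = (exp (- s * of_real (ln (real q)))) ^ m" by (rule exp_of_nat_mult)
  finally show ?thesis using cpowr_E[OF assms] by simp
qed

lemma norm_X: assumes "2 \<le> q" "1 < Re s" shows "norm ((of_nat q :: complex) powr (- s)) < 1"
proof -
  have "norm ((of_nat q :: complex) powr (- s)) = real q powr Re (- s)"
    using norm_powr_real_powr[of "of_nat q" "- s"] by simp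
  also have "\<dots> < 1" using assms by (intro powr_less_one) auto
  finally show ?thesis .
qed

definition mu :: "nat \<Rightarrow> nat \<Rightarrow> real" where
  "mu q j = (if j = 0 then 1 else 1 / ((real q + 1) * real q ^ (j - 1)))"

lemma mu_le: assumes "1 \<le> q" shows "0 \<le> mu q j \<and> mu q j \<le> 1"
proof -
  have h1: "1 \<le> real q ^ (j-1)" by (rule one_le_power) (use assms in simp)
  have "1 * 1 \<le> (real q + 1) * real q ^ (j - 1)" by (rule mult_mono) (use h1 in auto)
  then show ?thesis by (auto simp: mu_def)
qed

lemma dist_div: "((a::complex)*b + c*d)/z = a*(b/z) + c*(d/z)"
  by (simp add: add_divide_distrib)

definition gvs :: "nat \<Rightarrow> complex \<Rightarrow> nat \<Rightarrow> complex" where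
  "gvs q X e = (of_nat q * X^e + (of_nat q - 1) * X^e * (\<Sum>i<e div 2. 1 / (X^2 * of_nat q)^(Suc i))
      + 1 / of_nat q ^ (e div 2)) / (of_nat q + 1)"

lemma gvs_rec: assumes "2 \<le> q" "X \<noteq> 0"
  shows "gvs q X (Suc e) = (1 - X) * of_real (mu q (Suc (e div 2))) + X * gvs q X e"
proof -
  define Q where "Q = (of_nat q :: complex)"
  have "Re (Q + 1) > 0" "Re Q > 0" using assms unfolding Q_def by auto
  then have Q0: "Q \<noteq> 0" "Q + 1 \<noteq> 0" by (metis less_irrefl zero_complex.sel(1))+
  have mu: "complex_of_real (mu q (Suc k)) = 1 / ((Q + 1) * Q ^ k)" for k
    by (simp add: mu_def Q_def)
  show ?thesis
  proof (cases "even e")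
    case True
    then obtain k where e: "e = 2 * k" by blast
    have d: "Suc e div 2 = k" "e div 2 = k" using e by auto
    define \<sigma> where "\<sigma> = (\<Sum>i<k. 1 / (X^2 * Q)^(Suc i))"
    define ip where "ip = 1 / Q ^ k"
    have m: "1 / ((Q + 1) * Q ^ k) = ip / (Q + 1)" unfolding ip_def by simp
    have A: "Q * X ^ Suc e + (Q - 1) * X ^ Suc e * \<sigma> + ip = (1 - X) * ip + X * (Q * X ^ e + (Q - 1) * X ^ e * \<sigma> + ip)"
      by (simp add: algebra_simps)
    show ?thesis unfolding gvs_def d mu Q_def[symmetric] \<sigma>_def[symmetric] m ip_def[symmetric]
      unfolding A by (rule dist_div)
  next
    case False
    then obtain k where e: "e = 2 * k + 1" using oddE by blast
    have d: "Suc e div 2 = Suc k" "e div 2 = k" using e by auto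
    define \<sigma> where "\<sigma> = (\<Sum>i<k. 1 / (X^2 * Q)^(Suc i))"
    define ip where "ip = 1 / Q ^ k"
    have m: "1 / ((Q + 1) * Q ^ k) = ip / (Q + 1)" unfolding ip_def by simp
    have s: "(\<Sum>i<Suc k. 1 / (X^2 * Q)^(Suc i)) = \<sigma> + 1 / (X^2 * Q)^(Suc k)"
      unfolding \<sigma>_def by simp
    have x: "X ^ Suc e * (1 / (X^2 * Q)^(Suc k)) = ip / Q"
    proof -
      have "Suc e = 2 * Suc k" using e by simp
      then have "X ^ Suc e = (X^2) ^ Suc k" by (simp only: power_mult)
      then have "X ^ Suc e * (1 / (X^2 * Q)^(Suc k)) = (X^2) ^ Suc k * (1 / ((X^2)^Suc k * Q ^ Suc k))"
        by (simp only: power_mult_distrib)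
      also have "\<dots> = 1 / Q ^ Suc k" using assms(2) by simp
      also have "\<dots> = ip / Q" unfolding ip_def by simp
      finally show ?thesis .
    qed
    have ip2: "1 / Q ^ Suc k = ip / Q" unfolding ip_def by simp
    have A: "Q * X ^ Suc e + (Q - 1) * X ^ Suc e * (\<sigma> + 1 / (X^2 * Q)^(Suc k)) + ip / Q
       = (1 - X) * ip + X * (Q * X ^ e + (Q - 1) * X ^ e * \<sigma> + ip)"
    proof -
      have "Q * X ^ Suc e + (Q - 1) * X ^ Suc e * (\<sigma> + 1 / (X^2 * Q)^(Suc k)) + ip / Q
         = Q * X ^ Suc e + (Q - 1) * X ^ Suc e * \<sigma> + (Q - 1) * (X ^ Suc e * (1 / (X^2 * Q)^(Suc k))) + ip / Q"
        by (simp add: algebra_simps)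
      also have "\<dots> = Q * X ^ Suc e + (Q - 1) * X ^ Suc e * \<sigma> + ip" unfolding x using Q0
        by (simp add: field_simps)
      finally show ?thesis by (simp add: algebra_simps)
    qed
    show ?thesis unfolding gvs_def d mu Q_def[symmetric] s \<sigma>_def[symmetric] m ip_def[symmetric] ip2
      unfolding A by (rule dist_div)
  qed
qed


lemma Gs_sums: assumes q: "2 \<le> q" and X: "norm X < 1" "X \<noteq> 0"
  shows "(\<lambda>n. complex_of_real (mu q ((e - n + 1) div 2)) * X^n) sums (gvs q X e / (1 - X))"
proof (induction e)
  case 0
  have "(\<lambda>n. complex_of_real (mu q ((0 - n + 1) div 2)) * X^n) = (\<lambda>n. X^n)"
    by (simp add: mu_def)
  moreover have "gvs q X 0 = 1"
  proof -
    have "Re (of_nat q + 1 :: complex) > 0" by simp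
    then have "(of_nat q + 1 :: complex) \<noteq> 0" by (metis less_irrefl zero_complex.sel(1))
    then show ?thesis by (simp add: gvs_def)
  qed
  ultimately show ?case using geometric_sums[OF X(1)] by simp
next
  case (Suc e)
  define f where "f n = complex_of_real (mu q ((Suc e - n + 1) div 2)) * X^n" for n
  have "(\<lambda>n. f (Suc n)) = (\<lambda>n. X * (complex_of_real (mu q ((e - n + 1) div 2)) * X^n))"
    by (simp add: f_def algebra_simps)
  then have "(\<lambda>n. f (Suc n)) sums (X * (gvs q X e / (1 - X)))"
    using sums_mult[OF Suc.IH, of X] by simp
  then have "f sums (X * (gvs q X e / (1 - X)) + f 0)" by (simp add: sums_Suc_iff)
  moreover have "f 0 = complex_of_real (mu q (Suc (e div 2)))" by (simp add: f_def)
  moreover have "X * (gvs q X e / (1 - X)) + complex_of_real (mu q (Suc (e div 2))) = gvs q X (Suc e) / (1 - X)"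
  proof -
    have "1 - X \<noteq> 0" using X(1) by auto
    then show ?thesis unfolding gvs_rec[OF q X(2)] by (simp add: field_simps)
  qed
  ultimately show ?case unfolding f_def by simp
qed

lemma gv_eq: assumes q: "2 \<le> q" and s: "1 < Re s"
  shows "gv q e s = gvs q ((of_nat q :: complex) powr (- s)) e"
proof -
  define L where "L = complex_of_real (ln (real q))"
  define E where "E z = exp (z * L)" for z
  define Q where "Q = (of_nat q :: complex)"
  define X where "X = Q powr (- s)"
  have qp: "0 < q" using q by simp
  have P: "Q powr z = E z" for z unfolding Q_def E_def L_def using cpowr_E[OF qp] by simp
  have Eadd: "E (a + b) = E a * E b" for a b unfolding E_def by (simp add: distrib_right exp_add)
  have Eminus: "E (- a) = 1 / E a" for a unfolding E_def by (simp add: exp_minus field_simps)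
  have Enat: "E (of_nat n * a) = E a ^ n" for n a unfolding E_def by (simp add: exp_of_nat_mult[symmetric] mult.assoc)
  have E1: "E 1 = Q" unfolding E_def L_def Q_def using qp by (simp add: exp_of_real)
  have EX: "E (- s) = X" unfolding X_def P ..
  have Xnz: "X \<noteq> 0" unfolding EX[symmetric] E_def by simp
  have Qnz: "Q \<noteq> 0" using qp unfolding Q_def by simp
  have nX: "norm X < 1" unfolding X_def Q_def using norm_X[OF q s] .
  have t1: "Q powr (1 - of_nat e * s) = Q * X ^ e"
  proof -
    have "1 - of_nat e * s = 1 + of_nat e * (- s)" by simp
    then show ?thesis unfolding P by (simp only: Eadd Enat E1 EX)
  qed
  have E2: "E (2 * s - 1) = 1 / (X^2 * Q)"
  proof -
    have "2 * s - 1 = - (of_nat 2 * (- s) + 1)" by simp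
    then show ?thesis by (simp only: Eminus[of "of_nat 2 * - s + 1"] Eadd Enat E1 EX)
  qed
  have t2: "Q powr ((2 - of_nat e) * s - 1) = X ^ e / (X^2 * Q)"
  proof -
    have "(2 - of_nat e) * s - 1 = of_nat e * (- s) + (2 * s - 1)" by (simp add: algebra_simps)
    then show ?thesis unfolding P by (simp only: Eadd Enat E2 EX) simp
  qed
  have t3: "Q powr ((2 * s - 1) * of_nat k) = (1 / (X^2 * Q)) ^ k" for k
  proof -
    have "(2 * s - 1) * of_nat k = of_nat k * (2 * s - 1)" by simp
    then show ?thesis unfolding P by (simp only: Enat E2)
  qed
  have t4: "Q powr (2 * s - 1) = 1 / (X^2 * Q)" unfolding P E2 ..
  have t5: "Q powr (- of_nat k) = 1 / Q ^ k" for k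
  proof -
    have "- of_nat k = - (of_nat k * (1::complex))" by simp
    then show ?thesis unfolding P by (simp only: Eminus Enat E1)
  qed
  define r where "r = 1 / (X^2 * Q)"
  have nX2: "norm X < 1 / real q"
  proof -
    have "norm X = real q powr Re (- s)" unfolding X_def Q_def using norm_powr_real_powr[of "of_nat q" "- s"] by simp
    also have "\<dots> < real q powr (- 1)" using q s by (intro powr_less_mono) auto
    also have "\<dots> = 1 / real q" using q by (simp add: powr_minus_divide)
    finally show ?thesis .
  qed
  have r1: "r \<noteq> 1"
  proof
    assume "r = 1"
    then have "X^2 * Q = 1" unfolding r_def by (simp add: divide_eq_1_iff)
    then have "norm X ^ 2 * real q = 1" unfolding Q_def by (metis norm_mult norm_of_nat norm_one norm_power)
    moreover have "norm X ^ 2 < (1 / real q) ^ 2" using nX2 by (intro power_strict_mono) auto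
    then have "norm X ^ 2 * real q < (1 / real q) ^ 2 * real q" using q by (intro mult_strict_right_mono) auto
    moreover have "(1 / real q) ^ 2 * real q \<le> 1" using q by (simp add: power2_eq_square field_simps)
    ultimately show False by linarith
  qed
  have geo: "(r ^ k - 1) / (r - 1) = (\<Sum>i<k. r ^ i)" for k using geometric_sum[OF r1] by simp
  have mid: "X ^ e / (X^2 * Q) * (\<Sum>i<k. r ^ i) = X ^ e * (\<Sum>i<k. 1 / (X^2 * Q) ^ Suc i)" for k
  proof -
    have "X ^ e / (X^2 * Q) * (\<Sum>i<k. r ^ i) = X ^ e * (\<Sum>i<k. r * r ^ i)"
      unfolding r_def by (simp add: sum_distrib_left)
    also have "\<dots> = X ^ e * (\<Sum>i<k. 1 / (X^2 * Q) ^ Suc i)"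
      unfolding r_def by (simp add: power_one_over)
    finally show ?thesis .
  qed
  define k where "k = e div 2"
  define G where "G = (\<Sum>i<k. r ^ i)"
  define SS where "SS = (\<Sum>i<k. 1 / (X^2 * Q) ^ Suc i)"
  have m: "X ^ e / (X^2 * Q) * G = X ^ e * SS" unfolding G_def SS_def using mid[of k] .
  have "gv q e s = 1 / (Q + 1) * (Q * X ^ e + (Q - 1) * (X ^ e / (X^2 * Q)) * G + 1 / Q ^ k)"
    unfolding gv_def Q_def[symmetric] X_def[symmetric] t1 t2 t3 t4 t5 r_def[symmetric] geo G_def k_def
    by simp
  also have "\<dots> = 1 / (Q + 1) * (Q * X ^ e + (Q - 1) * (X ^ e / (X^2 * Q) * G) + 1 / Q ^ k)"
    by (simp only: mult.assoc)
  also have "\<dots> = (Q * X ^ e + (Q - 1) * X ^ e * SS + 1 / Q ^ k) / (Q + 1)"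
    unfolding m by (simp add: mult.assoc)
  also have "\<dots> = gvs q X e" unfolding gvs_def Q_def[symmetric] SS_def k_def ..
  finally show ?thesis unfolding X_def Q_def .
qed


context nlf begin

lemma ZK_iff: assumes "m2det M = 1"
  shows "M \<in> ZK0 absv q e \<longleftrightarrow> M \<in> GL2O absv \<and> absv (m2lower M) \<le> (1 / real q) ^ e"
proof
  assume "M \<in> GL2O absv \<and> absv (m2lower M) \<le> (1 / real q) ^ e"
  then have "M \<in> K0 absv q e" by (simp add: K0_def)
  moreover have "M = m2mult (1,0,0,1) M" by (simp add: m2mult_id)
  ultimately show "M \<in> ZK0 absv q e" unfolding ZK0_def by fastforce
next
  assume "M \<in> ZK0 absv q e"
  then obtain z k where zk: "M = m2mult (z,0,0,z) k" "z \<noteq> 0" "k \<in> K0 absv q e" unfolding ZK0_def by blast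
  obtain k1 k2 k3 k4 where kk: "k = (k1,k2,k3,k4)" by (cases k rule: prod_cases4)
  have M: "M = (z*k1, z*k2, z*k3, z*k4)" using zk(1) kk by simp
  have kG: "absv k1 \<le> 1" "absv k2 \<le> 1" "absv k3 \<le> 1" "absv k4 \<le> 1" "absv (k1*k4 - k2*k3) = 1"
      "absv k3 \<le> (1 / real q) ^ e"
    using zk(3) kk by (auto simp: K0_def GL2O_iff)
  have "m2det M = z^2 * (k1*k4 - k2*k3)" unfolding M by (simp add: algebra_simps power2_eq_square)
  then have "absv (z^2 * (k1*k4 - k2*k3)) = 1" using assms by simp
  then have "absv z ^ 2 = 1" using kG(5) by simp
  then have z1: "absv z = 1" using nn[of z] by (simp add: power2_eq_1_iff)
  show "M \<in> GL2O absv \<and> absv (m2lower M) \<le> (1 / real q) ^ e"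
    using kG z1 assms unfolding M by (simp add: GL2O_iff)
qed

lemma M_formula: assumes D: "D = a*d - b*c" and Dnz: "D \<noteq> 0"
  shows "m2mult (m2inv (a,b,c,d)) (m2mult (1,y,0,1) (a,b,c,d)) =
    (1 + y*c*d/D, y*d*d/D, -(y*c*c)/D, 1 - y*c*d/D)"
proof -
  have "m2inv (a,b,c,d) = (d/D, -b/D, -c/D, a/D)" using D by (simp add: Let_def)
  then have "m2mult (m2inv (a,b,c,d)) (m2mult (1,y,0,1) (a,b,c,d)) = m2mult (d/D, -b/D, -c/D, a/D) (a + y*c, b + y*d, c, d)"
    by simp
  also have "\<dots> = ((d*(a + y*c) - b*c)/D, (d*(b + y*d) - b*d)/D, (-c*(a + y*c) + a*c)/D, (-c*(b + y*d) + a*d)/D)"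
    by (simp add: add_divide_distrib diff_divide_distrib)
  also have "d*(a + y*c) - b*c = D + y*c*d" using D by (simp add: algebra_simps)
  also have "d*(b + y*d) - b*d = y*d*d" by (simp add: algebra_simps)
  also have "-c*(a + y*c) + a*c = -(y*c*c)" by (simp add: algebra_simps)
  also have "-c*(b + y*d) + a*d = D - y*c*d" using D by (simp add: algebra_simps)
  finally show ?thesis using Dnz by (simp add: add_divide_distrib diff_divide_distrib)
qed

lemma char: assumes k: "(a,b,c,d) \<in> GL2O absv"
  shows "m2mult (m2inv (a,b,c,d)) (m2mult (1,y,0,1) (a,b,c,d)) \<in> ZK0 absv q e \<longleftrightarrow>
     absv y \<le> 1 \<and> absv y * absv c ^ 2 \<le> (1 / real q) ^ e"
proof -
  define D where "D = a*d - b*c"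
  have D1: "absv D = 1" using k by (simp add: GL2O_iff D_def)
  then have Dnz: "D \<noteq> 0" by auto
  have det: "m2det (1 + y*c*d/D, y*d*d/D, -(y*c*c)/D, 1 - y*c*d/D) = 1"
    using Dnz by (simp add: field_simps power2_eq_square)
  have G: "(1 + y*c*d/D, y*d*d/D, -(y*c*c)/D, 1 - y*c*d/D) \<in> GL2O absv \<longleftrightarrow> absv y \<le> 1"
  proof
    assume y: "absv y \<le> 1"
    have c: "absv c \<le> 1" "absv d \<le> 1" using k by (auto simp: GL2O_iff)
    have t: "absv (y*c*d/D) \<le> 1" using y c D1 nn[of y] nn[of c] nn[of d] by (simp add: mult_le_one)
    have "absv (1 + y*c*d/D) \<le> 1" by (rule ultra_le) (use t in auto)
    moreover have "absv (1 - y*c*d/D) \<le> 1" by (rule ultra_le_diff) (use t in auto)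
    moreover have "absv (y*d*d/D) \<le> 1" using y c D1 nn[of y] nn[of c] nn[of d] by (simp add: mult_le_one)
    moreover have "absv (-(y*c*c)/D) \<le> 1" using y c D1 nn[of y] nn[of c] nn[of d] by (simp add: mult_le_one)
    ultimately show "(1 + y*c*d/D, y*d*d/D, -(y*c*c)/D, 1 - y*c*d/D) \<in> GL2O absv"
      using det by (simp add: GL2O_def intO_def)
  next
    assume "(1 + y*c*d/D, y*d*d/D, -(y*c*c)/D, 1 - y*c*d/D) \<in> GL2O absv"
    then have h: "absv y * absv d * absv d \<le> 1" "absv y * absv c * absv c \<le> 1"
      using D1 by (auto simp: GL2O_iff)
    show "absv y \<le> 1" using GL2O_cd[OF k] h by auto
  qed
  show ?thesis
    unfolding M_formula[OF D_def Dnz] ZK_iff[OF det] G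
    using D1 by (simp add: power2_eq_square mult.assoc)
qed

end


locale both = nlfk absv q p dk + nlfy absv q p dy for absv :: "'a::field \<Rightarrow> real" and q p dk dy
begin

lemma Tlem: assumes k: "(a,b,c,d) \<in> GL2O absv"
  shows "(1 / real q) ^ n * absv c ^ 2 \<le> (1 / real q) ^ e \<longleftrightarrow> absv c \<le> (1 / real q) ^ ((e - n + 1) div 2)"
proof (cases "c = 0")
  case True
  then show ?thesis using qpos by simp
next
  case False
  moreover have "absv c \<le> 1" using k by (simp add: GL2O_iff)
  ultimately obtain i where i: "absv c = (1 / real q) ^ i" using vals_le1 by blast
  have "(1 / real q) ^ n * absv c ^ 2 = (1 / real q) ^ (n + 2 * i)"
    unfolding i by (simp add: power_add power_mult[symmetric] mult.commute)
  then have "(1 / real q) ^ n * absv c ^ 2 \<le> (1 / real q) ^ e \<longleftrightarrow> e \<le> n + 2 * i" using pw_le by simp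
  also have "\<dots> \<longleftrightarrow> (e - n + 1) div 2 \<le> i" by presburger
  also have "\<dots> \<longleftrightarrow> absv c \<le> (1 / real q) ^ ((e - n + 1) div 2)" unfolding i using pw_le by simp
  finally show ?thesis .
qed

definition "Tset e n = S ((e - n + 1) div 2)"

lemma S_mu: "measure dk (S j) = mu q j"
  by (cases j) (simp_all add: S0_measure S_measure mu_def)

lemma inner_value:
  assumes s: "1 < Re s" and k: "(a,b,c,d) \<in> GL2O absv"
  defines "X \<equiv> (of_nat q :: complex) powr (- s)"
  shows "(LINT y|dy. (if y = 0 then 0 else
           complex_of_real (real q / (real q - 1)) *
           complex_of_real (indicator (ZK0 absv q e) (m2mult (m2inv (a,b,c,d)) (m2mult (1, y, 0, 1) (a,b,c,d)))) *
           complex_of_real (absv y) powr s / complex_of_real (absv y)))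
      = (\<Sum>n. complex_of_real (indicator (Tset e n) (a,b,c,d)) * X^n)"
proof -
  define \<beta> where "\<beta> n = complex_of_real (indicator (Tset e n) (a,b,c,d))" for n
  define V where "V n = complex_of_real (real q / (real q - 1)) * X^n / complex_of_real ((1/real q)^n)" for n
  have nX: "norm X < 1" unfolding X_def using norm_X[OF q2 s] .
  have nb: "norm (\<beta> n) \<le> 1" for n by (simp add: \<beta>_def indicator_def)
  have sm: "(\<lambda>n. \<beta> n * X^n) sums (LINT y|dy. (\<Sum>n. indicator (shell n) y *\<^sub>R (\<beta> n * V n)))"
    unfolding V_def by (rule inner_sums[OF nX nb])
  have ind: "indicator (ZK0 absv q e) (m2mult (m2inv (a,b,c,d)) (m2mult (1, y, 0, 1) (a,b,c,d))) = (indicator (Tset e n) (a,b,c,d) :: real)"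
    if "absv y = (1 / real q) ^ n" for y n
  proof -
    have "absv y \<le> 1" using that q1 by (simp add: power_le_one)
    then show ?thesis unfolding indicator_def using char[OF k, of y e] Tlem[OF k, of n e] that
      by (simp add: Tset_def S_iff k mult.commute)
  qed
  have pt: "(if y = 0 then 0 else
           complex_of_real (real q / (real q - 1)) *
           complex_of_real (indicator (ZK0 absv q e) (m2mult (m2inv (a,b,c,d)) (m2mult (1, y, 0, 1) (a,b,c,d)))) *
           complex_of_real (absv y) powr s / complex_of_real (absv y))
      = (\<Sum>n. indicator (shell n) y *\<^sub>R (\<beta> n * V n))" for y
  proof (cases "\<exists>m. y \<in> shell m")
    case True
    then obtain m where m: "y \<in> shell m" by blast
    have ay: "absv y = (1 / real q) ^ m" using m by (simp add: shell_def)
    then have y0: "y \<noteq> 0" using qpos by auto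
    have "(\<lambda>n. indicator (shell n) y *\<^sub>R (\<beta> n * V n)) = (\<lambda>n. if n = m then \<beta> m * V m else 0)"
    proof
      fix n show "indicator (shell n) y *\<^sub>R (\<beta> n * V n) = (if n = m then \<beta> m * V m else 0)"
        using m shell_unique[of y n m] by (cases "n = m") (auto simp: indicator_def)
    qed
    then have "(\<Sum>n. indicator (shell n) y *\<^sub>R (\<beta> n * V n)) = \<beta> m * V m"
      using sums_single[of m "\<lambda>_. \<beta> m * V m"] sums_unique by metis
    moreover have "complex_of_real (absv y) powr s = X ^ m"
      unfolding ay X_def by (rule real_powr_X) (use qpos in simp)
    ultimately show ?thesis using y0 ind[OF ay] ay by (simp add: \<beta>_def V_def)
  next
    case False
    then have z: "(\<lambda>n. indicator (shell n) y *\<^sub>R (\<beta> n * V n)) = (\<lambda>n. 0)" by (auto simp: indicator_def)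
    have "indicator (ZK0 absv q e) (m2mult (m2inv (a,b,c,d)) (m2mult (1, y, 0, 1) (a,b,c,d))) = (0::real)" if y0: "y \<noteq> 0"
    proof -
      have "\<not> absv y \<le> 1"
      proof
        assume "absv y \<le> 1"
        then obtain m where "absv y = (1 / real q) ^ m" using vals_le1 y0 by blast
        then show False using False by (auto simp: shell_def)
      qed
      then show ?thesis using char[OF k, of y e] by (simp add: indicator_def)
    qed
    then show ?thesis unfolding z by simp
  qed
  show ?thesis unfolding pt using sums_unique[OF sm] by (simp add: \<beta>_def)
qed

end


context both begin

lemma int_ind: "integral\<^sup>L dk (\<lambda>k. indicator (Tset e n) k *\<^sub>R (c::'b::{banach,second_countable_topology})) = mu q ((e - n + 1) div 2) *\<^sub>R c"
proof -
  have "integrable dk (indicator (Tset e n) :: _ \<Rightarrow> real)"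
    unfolding Tset_def using S_meas dk_fin by (intro integrable_real_indicator) (auto simp: less_top)
  moreover have "Tset e n \<inter> space dk = Tset e n" unfolding Tset_def dk_space using S_sub by blast
  ultimately show ?thesis by (simp add: Tset_def S_mu)
qed

lemma main: assumes s: "1 < Re s" shows "Zv absv q dy dk e s = gv q e s / (1 - of_nat q powr (- s))"
proof -
  define X where "X = (of_nat q :: complex) powr (- s)"
  have nX: "norm X < 1" unfolding X_def using norm_X[OF q2 s] .
  have Xnz: "X \<noteq> 0" unfolding X_def using qpos by (simp add: powr_def)
  define g where "g n k = indicator (Tset e n) k *\<^sub>R X^n" for n k
  have eq: "Zv absv q dy dk e s = (LINT k|dk. (\<Sum>n. g n k))"
    unfolding Zv_def
  proof (rule Bochner_Integration.integral_cong[OF refl])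
    fix k assume "k \<in> space dk"
    then have kG: "k \<in> GL2O absv" by (simp add: dk_space)
    obtain a b c d where kk: "k = (a,b,c,d)" by (cases k rule: prod_cases4)
    show "(LINT y|dy. (if y = 0 then 0 else
           complex_of_real (real q / (real q - 1)) *
           complex_of_real (indicator (ZK0 absv q e) (m2mult (m2inv k) (m2mult (1, y, 0, 1) k))) *
           complex_of_real (absv y) powr s / complex_of_real (absv y))) = (\<Sum>n. g n k)"
      unfolding kk inner_value[OF s kG[unfolded kk]] g_def X_def by (simp add: scaleR_conv_of_real)
  qed
  have integ: "integrable dk (g n)" for n
    unfolding g_def Tset_def using S_meas dk_fin
    by (intro integrable_scaleR_left integrable_real_indicator) (auto simp: less_top)
  have bound: "norm (g n k) \<le> norm X ^ n" for n k
    by (simp add: g_def indicator_def norm_power)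
  have summ: "AE k in dk. summable (\<lambda>n. norm (g n k))"
  proof (rule AE_I2)
    fix k show "summable (\<lambda>n. norm (g n k))"
      by (rule summable_comparison_test[where g="\<lambda>n. norm X ^ n"]) (use bound nX in \<open>auto simp: summable_geometric\<close>)
  qed
  have nint: "(\<integral>k. norm (g n k) \<partial>dk) = mu q ((e - n + 1) div 2) * norm X ^ n" for n
  proof -
    have "(\<integral>k. norm (g n k) \<partial>dk) = (\<integral>k. indicator (Tset e n) k *\<^sub>R (norm X ^ n) \<partial>dk)"
      unfolding g_def by (intro Bochner_Integration.integral_cong) (auto simp: indicator_def norm_power)
    also have "\<dots> = mu q ((e - n + 1) div 2) *\<^sub>R (norm X ^ n)" by (rule int_ind)
    finally show ?thesis by simp
  qed
  have summ2: "summable (\<lambda>n. (\<integral>k. norm (g n k) \<partial>dk))"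
    unfolding nint
  proof (rule summable_comparison_test[where g="\<lambda>n. norm X ^ n"])
    show "\<exists>N. \<forall>n\<ge>N. norm (mu q ((e - n + 1) div 2) * norm X ^ n) \<le> norm X ^ n"
      using mu_le[of q] q2 by (auto simp: abs_mult intro!: mult_left_le_one_le)
    show "summable (\<lambda>n. norm X ^ n)" using nX by (simp add: summable_geometric)
  qed
  have "(\<lambda>n. integral\<^sup>L dk (g n)) sums (LINT k|dk. (\<Sum>n. g n k))"
    by (rule sums_integral[OF integ summ summ2])
  moreover have "integral\<^sup>L dk (g n) = complex_of_real (mu q ((e - n + 1) div 2)) * X^n" for n
    unfolding g_def int_ind by (simp add: scaleR_conv_of_real)
  ultimately have "(\<lambda>n. complex_of_real (mu q ((e - n + 1) div 2)) * X^n) sums Zv absv q dy dk e s"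
    unfolding eq by simp
  moreover have "(\<lambda>n. complex_of_real (mu q ((e - n + 1) div 2)) * X^n) sums (gvs q X e / (1 - X))"
    by (rule Gs_sums[OF q2 nX Xnz])
  ultimately have "Zv absv q dy dk e s = gvs q X e / (1 - X)" using sums_unique2 by blast
  then show ?thesis unfolding X_def gv_eq[OF q2 s] .
qed

end

theorem lemma3p12:
  fixes absv :: "'a::field \<Rightarrow> real" and q e :: nat and unif :: 'a
    and dy :: "'a measure" and dk :: "'a m2 measure" and s :: complex
  assumes "nonarch_local_field absv q unif"
    and "additive_haar absv dy"
    and "gl2O_haar absv dk"
    and "1 < Re s"
  shows "Zv absv q dy dk e s = gv q e s / (1 - of_nat q powr (- s))"
proof -
  interpret both absv q unif dk dy
    using assms(1,2,3) by (simp add: both_def nlfk_def nlfy_def nlfk_axioms_def nlfy_axioms_def nlf_def)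
  show ?thesis by (rule main[OF assms(4)])
qed


end
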